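(* Let $n\ge2$, let $G$ be an absolutely continuous distribution function on $[0,\infty)$, $\lambda>0$, $\alpha_1,\dots,\alpha_n,\alpha^*_1,\dots,\alpha^*_n>0$. Let $\phi_1,\phi_2$ be Archimedean generators with pseudo-inverses $\psi_1,\psi_2$. Let $\boldsymbol{X}=(X_1,\dots,X_n)$ have joint distribution function $\phi_1\big(\sum_{i=1}^n\psi_1([G(\lambda x_i)]^{\alpha_i})\big)$ and $\boldsymbol{X}^*$ have joint distribution function $\phi_2\big(\sum_{i=1}^n\psi_2([G(\lambda x_i)]^{\alpha^*_i})\big)$. If $\phi_1$ or $\phi_2$ is log-convex, $\psi_2\circ\phi_1$ is super-additive, and $\prod_{i=1}^{j}\alpha^*_{[i]}\le\prod_{i=1}^{j}\alpha_{[i]}$ for all $j=1,\dots,n$, then $X_{n:n}\ge_{\rm st}X^*_{n:n}$.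
   Context: An Archimedean generator is an $n$-monotone function $\phi:[0,\infty)\to[0,1]$ with $\phi(0)=1$, $\lim_{x\to\infty}\phi(x)=0$ ($n$-monotone: $(-1)^k\phi^{(k)}\ge0$ for $k=0,\dots,n-2$ and $(-1)^{n-2}\phi^{(n-2)}$ decreasing and convex); $\psi=\phi^{-1}$ is its pseudo-inverse. $h$ super-additive means $h(x+y)\ge h(x)+h(y)$ for $x,y\ge0$. $\alpha_{[1]}\ge\dots\ge\alpha_{[n]}$ are the components in decreasing order. $X_{n:n}=\max_i X_i$. $X\le_{\rm st}Y$ means $P(X>x)\le P(Y>x)$ for all $x$. *)

theory Defs
  imports "HOL-Probability.Probability"
begin

definition abs_cont_cdf_nonneg :: "(real \<Rightarrow> real) \<Rightarrow> bool" where
  "abs_cont_cdf_nonneg G \<longleftrightarrow>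
     (\<exists>M. real_distribution M \<and> absolutely_continuous lborel M \<and>
          measure M {..<0} = 0 \<and> (\<forall>x. G x = measure M {..x}))"

definition n_monotone :: "nat \<Rightarrow> (real \<Rightarrow> real) \<Rightarrow> bool" where
  "n_monotone n \<phi> \<longleftrightarrow>
     (\<forall>k < n - 2. \<forall>x > 0. (deriv ^^ k) \<phi> differentiable at x) \<and>
     (\<forall>k \<le> n - 2. \<forall>x > 0. (-1) ^ k * (deriv ^^ k) \<phi> x \<ge> 0) \<and>
     antimono_on {0<..} (\<lambda>x. (-1) ^ (n - 2) * (deriv ^^ (n - 2)) \<phi> x) \<and>
     convex_on {0<..} (\<lambda>x. (-1) ^ (n - 2) * (deriv ^^ (n - 2)) \<phi> x)"

definition archimedean_generator :: "nat \<Rightarrow> (real \<Rightarrow> real) \<Rightarrow> bool" where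
  "archimedean_generator n \<phi> \<longleftrightarrow>
     (\<forall>x \<ge> 0. 0 \<le> \<phi> x \<and> \<phi> x \<le> 1) \<and> continuous_on {0..} \<phi> \<and>
     \<phi> 0 = 1 \<and> (\<phi> \<longlongrightarrow> 0) at_top \<and> n_monotone n \<phi>"

text \<open>Pseudo-inverse, extended-real valued: psi t = inf {x >= 0. phi x = t}
  (= infinity if the set is empty, e.g. psi 0 for a strict generator).\<close>
definition pseudo_inv :: "(real \<Rightarrow> real) \<Rightarrow> real \<Rightarrow> ereal" where
  "pseudo_inv \<phi> t = Inf {ereal x | x. 0 \<le> x \<and> \<phi> x = t}"

definition gen_ext :: "(real \<Rightarrow> real) \<Rightarrow> ereal \<Rightarrow> real" where
  "gen_ext \<phi> s = (if s = \<infinity> then 0 else \<phi> (real_of_ereal s))"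

definition arch_joint_cdf ::
  "nat \<Rightarrow> (real \<Rightarrow> real) \<Rightarrow> (real \<Rightarrow> real) \<Rightarrow> real \<Rightarrow> (nat \<Rightarrow> real) \<Rightarrow> (nat \<Rightarrow> real) \<Rightarrow> real" where
  "arch_joint_cdf n \<phi> G lam \<alpha> x =
     gen_ext \<phi> (\<Sum>i<n. pseudo_inv \<phi> (G (lam * x i) powr \<alpha> i))"

definition log_convex :: "(real \<Rightarrow> real) \<Rightarrow> bool" where
  "log_convex \<phi> \<longleftrightarrow> (\<forall>x y t. 0 \<le> x \<longrightarrow> 0 \<le> y \<longrightarrow> 0 < t \<longrightarrow> t < 1 \<longrightarrow>
      \<phi> (t * x + (1 - t) * y) \<le> \<phi> x powr t * \<phi> y powr (1 - t))"

definition superadditive_ext :: "(real \<Rightarrow> ereal) \<Rightarrow> bool" where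
  "superadditive_ext h \<longleftrightarrow> (\<forall>x y. 0 \<le> x \<longrightarrow> 0 \<le> y \<longrightarrow> h (x + y) \<ge> h x + h y)"

definition decr_sorted :: "nat \<Rightarrow> (nat \<Rightarrow> real) \<Rightarrow> real list" where
  "decr_sorted n \<alpha> = rev (sort (map \<alpha> [0..<n]))"

end

theory Submission
  imports Defs
begin


lemma pinv_alt: "pseudo_inv \<phi> t = Inf (ereal ` {x. 0 \<le> x \<and> \<phi> x = t})"
  unfolding pseudo_inv_def by (rule arg_cong[where f=Inf]) auto

lemma pinv_nonneg: "0 \<le> pseudo_inv \<phi> t"
  unfolding pinv_alt by (auto intro!: Inf_greatest)

lemma pinv_le:
  assumes "archimedean_generator n \<phi>" "0 \<le> y" "\<phi> y \<le> v" "v \<le> 1"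
  shows "pseudo_inv \<phi> v \<le> ereal y"
proof -
  have c: "continuous_on {0..y} \<phi>"
    using assms(1) unfolding archimedean_generator_def
    by (auto intro: continuous_on_subset)
  have "\<phi> 0 = 1" using assms(1) unfolding archimedean_generator_def by auto
  then obtain x where x: "0 \<le> x" "x \<le> y" "\<phi> x = v"
    using IVT2'[of \<phi> y v 0] c assms by auto
  then have "pseudo_inv \<phi> v \<le> ereal x" unfolding pinv_alt by (auto intro!: Inf_lower)
  also have "\<dots> \<le> ereal y" using x by simp
  finally show ?thesis .
qed

lemma pinv_attained:
  assumes g: "archimedean_generator n \<phi>" and S: "{x. 0 \<le> x \<and> \<phi> x = v} \<noteq> {}"
  shows "\<exists>r\<ge>0. pseudo_inv \<phi> v = ereal r \<and> \<phi> r = v"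
proof -
  define S where "S = {x. 0 \<le> x \<and> \<phi> x = v}"
  have cont: "continuous_on {0..} \<phi>" using g unfolding archimedean_generator_def by auto
  have cl: "closed S"
    unfolding S_def using continuous_closed_preimage_constant[OF cont] by simp
  have bb: "bdd_below S" unfolding S_def by (auto intro!: bdd_belowI[where m=0])
  have ne: "S \<noteq> {}" using S S_def by simp
  have "Inf S \<in> S" using closed_contains_Inf[OF ne bb cl] .
  moreover have "pseudo_inv \<phi> v = ereal (Inf S)"
    unfolding pinv_alt S_def[symmetric] using ereal_Inf'[OF bb ne] by (simp add: image_def)
  ultimately show ?thesis unfolding S_def by auto
qed

lemma gen_nonempty:
  assumes g: "archimedean_generator n \<phi>" and v: "0 < v" "v \<le> 1"
  shows "{x. 0 \<le> x \<and> \<phi> x = v} \<noteq> {}"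
proof -
  have "(\<phi> \<longlongrightarrow> 0) at_top" using g unfolding archimedean_generator_def by auto
  then have "eventually (\<lambda>x. \<phi> x < v) at_top" using v by (auto dest: order_tendstoD)
  then obtain y where y: "\<And>x. x \<ge> y \<Longrightarrow> \<phi> x < v" by (auto simp: eventually_at_top_linorder)
  define z where "z = max y 0"
  have "\<phi> z \<le> v" "0 \<le> z" using y[of z] by (auto simp: z_def)
  have c: "continuous_on {0..z} \<phi>"
    using g unfolding archimedean_generator_def
    by (auto intro: continuous_on_subset)
  have "\<phi> 0 = 1" using g unfolding archimedean_generator_def by auto
  then obtain x where x: "0 \<le> x" "x \<le> z" "\<phi> x = v"
    using IVT2'[of \<phi> z v 0] c v \<open>\<phi> z \<le> v\<close> \<open>0 \<le> z\<close> by auto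
  then show ?thesis by auto
qed

lemma pinv_pos_finite:
  assumes g: "archimedean_generator n \<phi>" and v: "0 < v" "v \<le> 1"
  shows "\<exists>r\<ge>0. pseudo_inv \<phi> v = ereal r \<and> \<phi> r = v"
  using pinv_attained[OF g gen_nonempty[OF g v]] .

lemma gen_ext_pinv:
  assumes g: "archimedean_generator n \<phi>" and v: "0 \<le> v" "v \<le> 1"
  shows "gen_ext \<phi> (pseudo_inv \<phi> v) = v"
proof (cases "{x. 0 \<le> x \<and> \<phi> x = v} = {}")
  case True
  then have "v = 0" using gen_nonempty[OF g _ v(2)] v by force
  have "pseudo_inv \<phi> v = \<infinity>" unfolding pinv_alt True by (simp add: top_ereal_def)
  then show ?thesis using \<open>v = 0\<close> by (simp add: gen_ext_def top_ereal_def)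
next
  case False
  then show ?thesis using pinv_attained[OF g False] by (auto simp: gen_ext_def)
qed

lemma gen_antimono:
  assumes g: "archimedean_generator n \<phi>" and n: "n \<ge> 2" and xy: "0 \<le> x" "x \<le> y"
  shows "\<phi> y \<le> \<phi> x"
proof (cases "x = 0")
  case True
  then show ?thesis using g xy unfolding archimedean_generator_def by auto
next
  case False
  then have x0: "x > 0" using xy by simp
  show ?thesis
  proof (cases "n = 2")
    case True
    then have "antimono_on {0<..} \<phi>" using g
      unfolding archimedean_generator_def n_monotone_def by simp
    then show ?thesis using x0 xy by (auto simp: monotone_on_def)
  next
    case False
    then have n3: "n \<ge> 3" using n by simp
    have d: "\<phi> differentiable at z" if "z > 0" for z
    proof -
      have "\<forall>k < n - 2. \<forall>x>0. (deriv ^^ k) \<phi> differentiable at x"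
        using g unfolding archimedean_generator_def n_monotone_def by blast
      moreover have "0 < n - 2" using n3 by simp
      ultimately have "(deriv ^^ 0) \<phi> differentiable at z" using that by blast
      then show ?thesis by simp
    qed
    have dn: "deriv \<phi> z \<le> 0" if "z > 0" for z
    proof -
      have "\<forall>k \<le> n - 2. \<forall>x>0. 0 \<le> (-1) ^ k * (deriv ^^ k) \<phi> x"
        using g unfolding archimedean_generator_def n_monotone_def by blast
      moreover have "1 \<le> n - 2" using n3 by simp
      ultimately have "(-1) ^ 1 * (deriv ^^ 1) \<phi> z \<ge> 0" using that by blast
      then show ?thesis by simp
    qed
    show ?thesis
    proof (rule DERIV_nonpos_imp_nonincreasing[OF xy(2)])
      fix z assume "x \<le> z" "z \<le> y"
      then have "z > 0" using x0 by simp
      then show "\<exists>y. DERIV \<phi> z :> y \<and> y \<le> 0"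
        using d dn DERIV_deriv_iff_real_differentiable by blast
    qed
  qed
qed

lemma gen_range: "archimedean_generator n \<phi> \<Longrightarrow> 0 \<le> x \<Longrightarrow> 0 \<le> \<phi> x \<and> \<phi> x \<le> 1"
  unfolding archimedean_generator_def by auto

lemma gen_ext_nonneg:
  assumes g: "archimedean_generator n \<phi>" and "0 \<le> s"
  shows "0 \<le> gen_ext \<phi> s"
  using assms gen_range[OF g, of "real_of_ereal s"] unfolding gen_ext_def
  by (auto simp: real_of_ereal_pos)

lemma gen_ext_antimono:
  assumes g: "archimedean_generator n \<phi>" and n: "n \<ge> 2" and ab: "0 \<le> a" "a \<le> b"
  shows "gen_ext \<phi> b \<le> gen_ext \<phi> a"
proof (cases "b = \<infinity>")
  case True
  then show ?thesis using gen_ext_nonneg[OF g ab(1)] by (simp add: gen_ext_def)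
next
  case False
  then obtain ra rb where "a = ereal ra" "b = ereal rb" using ab
    by (cases a; cases b) auto
  then show ?thesis using gen_antimono[OF g n, of ra rb] ab by (simp add: gen_ext_def)
qed



definition slope :: "(real \<Rightarrow> real) \<Rightarrow> real \<Rightarrow> real \<Rightarrow> real" where
  "slope k p q = (k p - k q) / (p - q)"

lemma slope_sym: "slope k p q = slope k q p"
  unfolding slope_def by (cases "p = q") (auto simp: field_simps)

lemma slope_mono1:
  assumes cv: "convex_on UNIV k" and "a \<le> a'" "a \<noteq> b" "a' \<noteq> b"
  shows "slope k a b \<le> slope k a' b"
proof (cases "a = a'")
  case True then show ?thesis by simp
next
  case False
  then have lt: "a < a'" using assms by simp
  consider "b < a" | "a < b \<and> b < a'" | "a' < b" using assms lt by linarith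
  then show ?thesis
  proof cases
    case 1
    then show ?thesis using convex_on_slope_le(1)[OF cv _ _ 1 lt]
      unfolding slope_def by (simp add: slope_sym[unfolded slope_def] )
  next
    case 2
    then have "slope k a b \<le> slope k a a'" "slope k a a' \<le> slope k b a'"
      using convex_on_slope_le[OF cv, of a a' b] unfolding slope_def by auto
    then show ?thesis using slope_sym[of k b a'] by simp
  next
    case 3
    then show ?thesis using convex_on_slope_le(2)[OF cv _ _ lt 3]
      unfolding slope_def by simp
  qed
qed

lemma slope_mono:
  assumes cv: "convex_on UNIV k" and "a \<le> a'" "b \<le> b'" "a \<noteq> b" "a' \<noteq> b'"
  shows "slope k a b \<le> slope k a' b'"
proof (cases "a' = b")
  case False
  have "slope k a b \<le> slope k a' b" using slope_mono1[OF cv] assms False by simp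
  also have "slope k a' b = slope k b a'" by (rule slope_sym)
  also have "\<dots> \<le> slope k b' a'" using slope_mono1[OF cv] assms False by simp
  also have "\<dots> = slope k a' b'" by (rule slope_sym)
  finally show ?thesis .
next
  case True
  then have "a \<noteq> b'" using assms by auto
  have "slope k a b = slope k b a" by (rule slope_sym)
  also have "\<dots> \<le> slope k b' a" using slope_mono1[OF cv] assms \<open>a \<noteq> b'\<close> by simp
  also have "\<dots> = slope k a b'" by (rule slope_sym)
  also have "\<dots> \<le> slope k a' b'" using slope_mono1[OF cv] assms \<open>a \<noteq> b'\<close> by simp
  finally show ?thesis .
qed

lemma abel_gen:
  fixes c d :: "nat \<Rightarrow> real"
  assumes dec: "\<forall>i j. i < j \<longrightarrow> j < n \<longrightarrow> d i \<noteq> 0 \<longrightarrow> d j \<noteq> 0 \<longrightarrow> c j \<le> c i"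
    and D: "\<forall>m\<le>n. 0 \<le> (\<Sum>i<m. d i)"
  shows "m \<le> n \<Longrightarrow> 0 \<le> \<gamma> \<Longrightarrow> (\<forall>i<m. d i \<noteq> 0 \<longrightarrow> \<gamma> \<le> c i) \<Longrightarrow>
         \<gamma> * (\<Sum>i<m. d i) \<le> (\<Sum>i<m. c i * d i)"
proof (induction m arbitrary: \<gamma>)
  case 0 then show ?case by simp
next
  case (Suc m)
  show ?case
  proof (cases "d m = 0")
    case True
    have "\<forall>i<m. d i \<noteq> 0 \<longrightarrow> \<gamma> \<le> c i" using Suc.prems(3) by simp
    then have "\<gamma> * (\<Sum>i<m. d i) \<le> (\<Sum>i<m. c i * d i)"
      using Suc.IH[of \<gamma>] Suc.prems(1,2) by simp
    then show ?thesis using True by simp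
  next
    case False
    have cm: "\<gamma> \<le> c m" using Suc.prems False by auto
    have ih: "c m * (\<Sum>i<m. d i) \<le> (\<Sum>i<m. c i * d i)"
    proof (rule Suc.IH)
      show "m \<le> n" using Suc.prems(1) by simp
      show "0 \<le> c m" using cm Suc.prems(2) by simp
      show "\<forall>i<m. d i \<noteq> 0 \<longrightarrow> c m \<le> c i"
        using dec False Suc.prems(1) by simp
    qed
    have "0 \<le> (\<Sum>i<Suc m. d i)" using D Suc.prems by blast
    then have "\<gamma> * (\<Sum>i<Suc m. d i) \<le> c m * (\<Sum>i<Suc m. d i)"
      using cm by (simp add: mult_right_mono)
    also have "\<dots> = c m * (\<Sum>i<m. d i) + c m * d m" by (simp add: distrib_left)
    also have "\<dots> \<le> (\<Sum>i<Suc m. c i * d i)" using ih by simp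
    finally show ?thesis .
  qed
qed

lemma karamata_weak:
  fixes x y :: "nat \<Rightarrow> real" and k :: "real \<Rightarrow> real"
  assumes cv: "convex_on UNIV k" and mo: "mono k"
    and xs: "\<forall>i j. i \<le> j \<longrightarrow> j < n \<longrightarrow> x j \<le> x i"
    and ys: "\<forall>i j. i \<le> j \<longrightarrow> j < n \<longrightarrow> y j \<le> y i"
    and P: "\<forall>m\<le>n. (\<Sum>i<m. y i) \<le> (\<Sum>i<m. x i)"
  shows "(\<Sum>i<n. k (y i)) \<le> (\<Sum>i<n. k (x i))"
proof -
  define c where "c i = slope k (x i) (y i)" for i
  define d where "d i = x i - y i" for i
  have eq: "k (x i) - k (y i) = c i * d i" for i
  proof (cases "x i = y i")
    case True then show ?thesis by (simp add: c_def d_def)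
  next
    case False then show ?thesis by (simp add: c_def d_def slope_def)
  qed
  have dec: "\<forall>i j. i < j \<longrightarrow> j < n \<longrightarrow> d i \<noteq> 0 \<longrightarrow> d j \<noteq> 0 \<longrightarrow> c j \<le> c i"
  proof (intro allI impI)
    fix i j assume h: "i < j" "j < n" "d i \<noteq> 0" "d j \<noteq> 0"
    then have "x j \<le> x i" "y j \<le> y i" using xs ys by auto
    then show "c j \<le> c i" unfolding c_def
      using slope_mono[OF cv, of "x j" "x i" "y j" "y i"] h(3,4) by (simp add: d_def)
  qed
  have D: "\<forall>m\<le>n. 0 \<le> (\<Sum>i<m. d i)"
  proof (intro allI impI)
    fix m assume "m \<le> n"
    then have "(\<Sum>i<m. y i) \<le> (\<Sum>i<m. x i)" using P by blast
    then show "0 \<le> (\<Sum>i<m. d i)" by (simp add: d_def sum_subtractf)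
  qed
  have cpos: "0 \<le> c i" if "d i \<noteq> 0" for i
  proof (cases "x i < y i")
    case True
    then have "k (x i) \<le> k (y i)" using mo by (simp add: monoD)
    then have "k (x i) - k (y i) \<le> 0" "x i - y i < 0" using True by simp_all
    then show ?thesis unfolding c_def slope_def by (rule divide_nonpos_neg)
  next
    case False
    then have "y i < x i" using that by (simp add: d_def)
    then have "k (y i) \<le> k (x i)" using mo by (simp add: monoD)
    then have "0 \<le> k (x i) - k (y i)" "0 < x i - y i" using \<open>y i < x i\<close> by simp_all
    then show ?thesis unfolding c_def slope_def by (rule divide_nonneg_pos)
  qed
  have "0 * (\<Sum>i<n. d i) \<le> (\<Sum>i<n. c i * d i)"
  proof (rule abel_gen[OF dec D])
    show "\<forall>i<n. d i \<noteq> 0 \<longrightarrow> 0 \<le> c i" using cpos by blast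
  qed simp_all
  also have "\<dots> = (\<Sum>i<n. k (x i)) - (\<Sum>i<n. k (y i))"
    by (simp add: eq[symmetric] sum_subtractf)
  finally show ?thesis by simp
qed



lemma super_sum:
  fixes h :: "real \<Rightarrow> ereal" and r :: "nat \<Rightarrow> real" and m :: nat
  assumes sup: "superadditive_ext h" and h0: "0 \<le> h 0" and r: "\<forall>i<m. 0 \<le> r i"
  shows "(\<Sum>i<m. h (r i)) \<le> h (\<Sum>i<m. r i)"
  using r
proof (induction m)
  case 0 then show ?case using h0 by simp
next
  case (Suc m)
  have "(\<Sum>i<Suc m. h (r i)) = (\<Sum>i<m. h (r i)) + h (r m)" by simp
  also have "\<dots> \<le> h (\<Sum>i<m. r i) + h (r m)"
  proof (rule add_right_mono)
    have "\<forall>i<m. 0 \<le> r i" using Suc.prems by simp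
    then show "(\<Sum>i<m. h (r i)) \<le> h (\<Sum>i<m. r i)" by (rule Suc.IH)
  qed
  also have "\<dots> \<le> h ((\<Sum>i<m. r i) + r m)"
  proof -
    have "0 \<le> (\<Sum>i<m. r i)" using Suc.prems by (intro sum_nonneg) auto
    moreover have "0 \<le> r m" using Suc.prems by simp
    ultimately show ?thesis using sup unfolding superadditive_ext_def by blast
  qed
  finally show ?case by simp
qed

lemma stepA:
  fixes n :: nat and v :: "nat \<Rightarrow> real"
  assumes g1: "archimedean_generator N \<phi>1" and g2: "archimedean_generator N \<phi>2" and N: "N \<ge> 2"
    and sup: "superadditive_ext (\<lambda>x. pseudo_inv \<phi>2 (\<phi>1 x))"
    and v: "\<forall>i<n. 0 \<le> v i \<and> v i \<le> 1"
  shows "gen_ext \<phi>1 (\<Sum>i<n. pseudo_inv \<phi>1 (v i)) \<le> gen_ext \<phi>2 (\<Sum>i<n. pseudo_inv \<phi>2 (v i))"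
proof -
  have rhs: "0 \<le> gen_ext \<phi>2 (\<Sum>i<n. pseudo_inv \<phi>2 (v i))"
    by (rule gen_ext_nonneg[OF g2]) (simp add: sum_nonneg pinv_nonneg)
  show ?thesis
  proof (cases "\<exists>i<n. pseudo_inv \<phi>1 (v i) = \<infinity>")
    case True
    then have "(\<Sum>i<n. pseudo_inv \<phi>1 (v i)) = \<infinity>" by (auto simp: sum_Pinfty)
    then show ?thesis using rhs by (simp add: gen_ext_def)
  next
    case False
    define r where "r i = real_of_ereal (pseudo_inv \<phi>1 (v i))" for i
    have ri: "pseudo_inv \<phi>1 (v i) = ereal (r i) \<and> 0 \<le> r i \<and> \<phi>1 (r i) = v i" if "i < n" for i
    proof -
      have ne: "{x. 0 \<le> x \<and> \<phi>1 x = v i} \<noteq> {}"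
      proof
        assume e: "{x. 0 \<le> x \<and> \<phi>1 x = v i} = {}"
        have "pseudo_inv \<phi>1 (v i) = \<infinity>" unfolding pinv_alt e by (simp add: top_ereal_def)
        then show False using False that by auto
      qed
      obtain r' where "r' \<ge> 0" "pseudo_inv \<phi>1 (v i) = ereal r'" "\<phi>1 r' = v i"
        using pinv_attained[OF g1 ne] by auto
      then show ?thesis by (simp add: r_def)
    qed
    define R where "R = (\<Sum>i<n. r i)"
    have R0: "0 \<le> R" unfolding R_def using ri by (intro sum_nonneg) auto
    have "(\<Sum>i<n. pseudo_inv \<phi>1 (v i)) = (\<Sum>i<n. ereal (r i))"
      using ri by (intro sum.cong) auto
    then have lhs: "gen_ext \<phi>1 (\<Sum>i<n. pseudo_inv \<phi>1 (v i)) = \<phi>1 R"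
      by (simp add: R_def gen_ext_def)
    have "(\<Sum>i<n. pseudo_inv \<phi>2 (\<phi>1 (r i))) \<le> pseudo_inv \<phi>2 (\<phi>1 R)"
      unfolding R_def by (rule super_sum[OF sup]) (use ri pinv_nonneg in auto)
    moreover have "(\<Sum>i<n. pseudo_inv \<phi>2 (\<phi>1 (r i))) = (\<Sum>i<n. pseudo_inv \<phi>2 (v i))"
      using ri by (intro sum.cong) auto
    ultimately have le: "(\<Sum>i<n. pseudo_inv \<phi>2 (v i)) \<le> pseudo_inv \<phi>2 (\<phi>1 R)" by simp
    have "gen_ext \<phi>2 (pseudo_inv \<phi>2 (\<phi>1 R)) \<le> gen_ext \<phi>2 (\<Sum>i<n. pseudo_inv \<phi>2 (v i))"
      by (rule gen_ext_antimono[OF g2 N _ le]) (simp add: sum_nonneg pinv_nonneg)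
    moreover have "gen_ext \<phi>2 (pseudo_inv \<phi>2 (\<phi>1 R)) = \<phi>1 R"
      using gen_ext_pinv[OF g2] gen_range[OF g1 R0] by simp
    ultimately show ?thesis using lhs by simp
  qed
qed

lemma ln_prod_list: "\<forall>x\<in>set L. 0 < (x::real) \<Longrightarrow> 0 < prod_list L \<and> ln (prod_list L) = sum_list (map ln L)"
  by (induction L) (auto simp: ln_mult)

lemma ds_len: "length (decr_sorted n \<beta>) = n"
  by (simp add: decr_sorted_def)

lemma ds_set: "set (decr_sorted n \<beta>) = \<beta> ` {..<n}"
  by (auto simp: decr_sorted_def)

lemma ds_sum: "(\<Sum>i<n. f (\<beta> i)) = (\<Sum>i<n. f (decr_sorted n \<beta> ! i))"
proof -
  have "(\<Sum>i<n. f (decr_sorted n \<beta> ! i)) = sum_list (map f (decr_sorted n \<beta>))"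
    by (simp add: sum_list_sum_nth ds_len atLeast0LessThan)
  also have "\<dots> = sum_mset (image_mset f (mset (decr_sorted n \<beta>)))"
    by (metis mset_map sum_mset_sum_list)
  also have "\<dots> = sum_mset (image_mset f (mset (map \<beta> [0..<n])))"
    by (simp add: decr_sorted_def)
  also have "\<dots> = sum_list (map f (map \<beta> [0..<n]))"
    by (metis mset_map sum_mset_sum_list)
  also have "\<dots> = (\<Sum>i<n. f (\<beta> i))"
    by (simp add: interv_sum_list_conv_sum_set_nat atLeast0LessThan comp_def)
  finally show ?thesis by simp
qed

lemma ds_sorted: "i \<le> j \<Longrightarrow> j < n \<Longrightarrow> decr_sorted n \<beta> ! j \<le> decr_sorted n \<beta> ! i"
  by (rule sorted_rev_nth_mono) (simp_all add: decr_sorted_def)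

lemma ds_prefix_ln:
  assumes pos: "\<forall>i<n. \<beta> i > 0" and m: "m \<le> n"
  shows "0 < prod_list (take m (decr_sorted n \<beta>)) \<and>
    ln (prod_list (take m (decr_sorted n \<beta>))) = (\<Sum>i<m. ln (decr_sorted n \<beta> ! i))"
proof -
  have "\<forall>x\<in>set (take m (decr_sorted n \<beta>)). 0 < x"
  proof
    fix x assume "x \<in> set (take m (decr_sorted n \<beta>))"
    then have "x \<in> set (decr_sorted n \<beta>)" by (rule in_set_takeD)
    then show "0 < x" using pos unfolding ds_set by auto
  qed
  note * = ln_prod_list[OF this]
  have "sum_list (map ln (take m (decr_sorted n \<beta>))) = (\<Sum>i<m. ln (decr_sorted n \<beta> ! i))"
    using m by (simp add: sum_list_sum_nth ds_len atLeast0LessThan min_def)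
  then show ?thesis using * by simp
qed



lemma powr_01: "0 \<le> (u::real) \<Longrightarrow> u \<le> 1 \<Longrightarrow> 0 \<le> a \<Longrightarrow> 0 \<le> u powr a \<and> u powr a \<le> 1"
  using powr_le1[of a u] by simp

lemma ds_pos: "\<forall>i<n. \<beta> i > 0 \<Longrightarrow> j < n \<Longrightarrow> 0 < decr_sorted n \<beta> ! j"
proof -
  assume p: "\<forall>i<n. \<beta> i > 0" and j: "j < n"
  have "decr_sorted n \<beta> ! j \<in> set (decr_sorted n \<beta>)" using j by (simp add: ds_len)
  then show ?thesis using p unfolding ds_set by auto
qed

lemma stepB:
  fixes n :: nat and \<alpha> \<alpha>s :: "nat \<Rightarrow> real" and u :: real
  assumes g: "archimedean_generator N \<phi>" and N: "N \<ge> 2" and lc: "log_convex \<phi>"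
    and apos: "\<forall>i<n. \<alpha> i > 0" and aspos: "\<forall>i<n. \<alpha>s i > 0"
    and maj: "\<forall>j\<in>{1..n}. prod_list (take j (decr_sorted n \<alpha>s)) \<le> prod_list (take j (decr_sorted n \<alpha>))"
    and u: "0 \<le> u" "u \<le> 1"
  shows "gen_ext \<phi> (\<Sum>i<n. pseudo_inv \<phi> (u powr \<alpha> i)) \<le> gen_ext \<phi> (\<Sum>i<n. pseudo_inv \<phi> (u powr \<alpha>s i))"
proof (cases "u = 0 \<or> u = 1")
  case True
  then have "(\<Sum>i<n. pseudo_inv \<phi> (u powr \<alpha> i)) = (\<Sum>i<n. pseudo_inv \<phi> (u powr \<alpha>s i))"
    by auto
  then show ?thesis by simp
next
  case False
  then have u0: "0 < u" "u < 1" using u by auto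
  define F where "F t = real_of_ereal (pseudo_inv \<phi> (u powr exp t))" for t
  have vpos: "0 < u powr exp t \<and> u powr exp t \<le> 1" for t
  proof -
    have "u powr exp t \<le> u powr 0" by (rule powr_mono') (use u in auto)
    then show ?thesis using u0 by simp
  qed
  have Fp: "pseudo_inv \<phi> (u powr exp t) = ereal (F t) \<and> 0 \<le> F t \<and> \<phi> (F t) = u powr exp t" for t
  proof -
    obtain r where "r \<ge> 0" "pseudo_inv \<phi> (u powr exp t) = ereal r" "\<phi> r = u powr exp t"
      using pinv_pos_finite[OF g, of "u powr exp t"] vpos[of t] by auto
    then show ?thesis by (simp add: F_def)
  qed
  have Fmono: "mono F"
  proof (rule monoI)
    fix s t :: real assume "s \<le> t"
    have "u powr exp t \<le> u powr exp s" by (rule powr_mono') (use \<open>s \<le> t\<close> u in auto)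
    then have "pseudo_inv \<phi> (u powr exp s) \<le> ereal (F t)"
      using pinv_le[OF g, of "F t" "u powr exp s"] Fp[of t] vpos[of s] by auto
    then show "F s \<le> F t" using Fp[of s] by simp
  qed
  have L: "\<And>a b t. 0 \<le> a \<Longrightarrow> 0 \<le> b \<Longrightarrow> 0 < t \<Longrightarrow> t < 1 \<Longrightarrow>
      \<phi> (t * a + (1 - t) * b) \<le> \<phi> a powr t * \<phi> b powr (1 - t)"
    using lc unfolding log_convex_def by blast
  have Fconv: "convex_on UNIV F"
  proof (rule convex_onI)
    fix \<theta> x y :: real assume th: "0 < \<theta>" "\<theta> < 1"
    define z where "z = (1 - \<theta>) * F x + \<theta> * F y"
    have z0: "0 \<le> z" using Fp[of x] Fp[of y] th by (simp add: z_def)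
    have "\<phi> z \<le> \<phi> (F x) powr (1 - \<theta>) * \<phi> (F y) powr (1 - (1 - \<theta>))"
      using L[of "F x" "F y" "1 - \<theta>"] Fp[of x] Fp[of y] th by (simp add: z_def)
    also have "\<dots> = u powr (exp x * (1 - \<theta>)) * u powr (exp y * \<theta>)"
      using Fp[of x] Fp[of y] by (simp add: powr_powr)
    also have "\<dots> = u powr ((1 - \<theta>) * exp x + \<theta> * exp y)"
      unfolding powr_add[symmetric] by (rule arg_cong[where f="\<lambda>e. u powr e"]) (simp add: mult.commute)
    also have "\<dots> \<le> u powr exp ((1 - \<theta>) * x + \<theta> * y)"
    proof (rule powr_mono')
      show "exp ((1 - \<theta>) * x + \<theta> * y) \<le> (1 - \<theta>) * exp x + \<theta> * exp y"
        using convex_onD[OF exp_convex, of \<theta> x y] th by simp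
    qed (use u in auto)
    finally have "\<phi> z \<le> u powr exp ((1 - \<theta>) * x + \<theta> * y)" .
    then have "pseudo_inv \<phi> (u powr exp ((1 - \<theta>) * x + \<theta> * y)) \<le> ereal z"
      using pinv_le[OF g z0] vpos by auto
    then show "F ((1 - \<theta>) *\<^sub>R x + \<theta> *\<^sub>R y) \<le> (1 - \<theta>) * F x + \<theta> * F y"
      using Fp[of "(1 - \<theta>) * x + \<theta> * y"] by (simp add: z_def)
  qed simp
  have sums: "(\<Sum>i<n. pseudo_inv \<phi> (u powr \<beta> i)) = ereal (\<Sum>i<n. F (ln (decr_sorted n \<beta> ! i)))"
    if bp: "\<forall>i<n. \<beta> i > 0" for \<beta>
  proof -
    have "(\<Sum>i<n. pseudo_inv \<phi> (u powr \<beta> i)) = (\<Sum>i<n. ereal (F (ln (\<beta> i))))"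
    proof (intro sum.cong refl)
      fix i assume "i \<in> {..<n}"
      then have "exp (ln (\<beta> i)) = \<beta> i" using bp by simp
      then show "pseudo_inv \<phi> (u powr \<beta> i) = ereal (F (ln (\<beta> i)))"
        using Fp[of "ln (\<beta> i)"] by simp
    qed
    also have "\<dots> = ereal (\<Sum>i<n. F (ln (\<beta> i)))" by simp
    also have "(\<Sum>i<n. F (ln (\<beta> i))) = (\<Sum>i<n. F (ln (decr_sorted n \<beta> ! i)))"
      by (rule ds_sum[of "\<lambda>b. F (ln b)"])
    finally show ?thesis .
  qed
  have sorted_ln: "\<forall>i j. i \<le> j \<longrightarrow> j < n \<longrightarrow> ln (decr_sorted n \<beta> ! j) \<le> ln (decr_sorted n \<beta> ! i)"
    if bp: "\<forall>i<n. \<beta> i > 0" for \<beta>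
  proof (intro allI impI)
    fix i j assume ij: "i \<le> j" "j < n"
    then show "ln (decr_sorted n \<beta> ! j) \<le> ln (decr_sorted n \<beta> ! i)"
      using ds_sorted[OF ij] ds_pos[OF bp, of i] ds_pos[OF bp, of j] by simp
  qed
  have K: "(\<Sum>i<n. F (ln (decr_sorted n \<alpha>s ! i))) \<le> (\<Sum>i<n. F (ln (decr_sorted n \<alpha> ! i)))"
  proof (rule karamata_weak[OF Fconv Fmono sorted_ln[OF apos] sorted_ln[OF aspos]])
    show "\<forall>m\<le>n. (\<Sum>i<m. ln (decr_sorted n \<alpha>s ! i)) \<le> (\<Sum>i<m. ln (decr_sorted n \<alpha> ! i))"
    proof (intro allI impI)
      fix m assume m: "m \<le> n"
      show "(\<Sum>i<m. ln (decr_sorted n \<alpha>s ! i)) \<le> (\<Sum>i<m. ln (decr_sorted n \<alpha> ! i))"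
      proof (cases "m = 0")
        case True then show ?thesis by simp
      next
        case False
        then have "m \<in> {1..n}" using m by simp
        then have le: "prod_list (take m (decr_sorted n \<alpha>s)) \<le> prod_list (take m (decr_sorted n \<alpha>))"
          using maj by blast
        have pa: "0 < prod_list (take m (decr_sorted n \<alpha>))"
            "ln (prod_list (take m (decr_sorted n \<alpha>))) = (\<Sum>i<m. ln (decr_sorted n \<alpha> ! i))"
          using ds_prefix_ln[OF apos m] by auto
        have pas: "0 < prod_list (take m (decr_sorted n \<alpha>s))"
            "ln (prod_list (take m (decr_sorted n \<alpha>s))) = (\<Sum>i<m. ln (decr_sorted n \<alpha>s ! i))"
          using ds_prefix_ln[OF aspos m] by auto
        have "ln (prod_list (take m (decr_sorted n \<alpha>s))) \<le> ln (prod_list (take m (decr_sorted n \<alpha>)))"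
          using le pa(1) pas(1) by (subst ln_le_cancel_iff) auto
        then show ?thesis using pa(2) pas(2) by simp
      qed
    qed
  qed
  have nn: "0 \<le> (\<Sum>i<n. F (ln (decr_sorted n \<alpha>s ! i)))" using Fp by (intro sum_nonneg) auto
  show ?thesis unfolding sums[OF apos] sums[OF aspos]
    by (rule gen_ext_antimono[OF g N]) (use K nn in auto)
qed




lemma max_set_eq:
  fixes n :: nat and Y :: "nat \<Rightarrow> 'c \<Rightarrow> real" and N :: "'c measure"
  assumes "n \<ge> 2"
  shows "{\<omega> \<in> space N. Max ((\<lambda>i. Y i \<omega>) ` {..<n}) > t} = space N - {\<omega> \<in> space N. \<forall>i<n. Y i \<omega> \<le> t}"
proof -
  have "0 \<in> {..<n}" using assms by simp
  then have ne: "(\<lambda>i. Y i \<omega>) ` {..<n} \<noteq> {}" for \<omega> by blast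
  have eq: "t < Max ((\<lambda>i. Y i \<omega>) ` {..<n}) \<longleftrightarrow> \<not> (\<forall>i<n. Y i \<omega> \<le> t)" for \<omega>
    using Max_gr_iff[OF finite_imageI[OF finite_lessThan] ne[of \<omega>], of t]
    by (auto simp: not_le)
  show ?thesis using eq by blast
qed



lemma all_le_meas:
  fixes n :: nat and Y :: "nat \<Rightarrow> 'c \<Rightarrow> real" and N :: "'c measure"
  assumes "\<forall>i<n. Y i \<in> borel_measurable N"
  shows "{\<omega> \<in> space N. \<forall>i<n. Y i \<omega> \<le> t} \<in> sets N"
proof -
  have each: "{\<omega> \<in> space N. Y i \<omega> \<le> t} \<in> sets N" if "i \<in> {..<n}" for i
  proof -
    have Yi: "Y i \<in> borel_measurable N" using assms that by simp
    have "Y i -` {..t} \<inter> space N \<in> sets N" by (rule measurable_sets[OF Yi]) simp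
    moreover have "{\<omega> \<in> space N. Y i \<omega> \<le> t} = Y i -` {..t} \<inter> space N" by blast
    ultimately show ?thesis by simp
  qed
  have "{\<omega> \<in> space N. \<forall>i\<in>{..<n}. Y i \<omega> \<le> t} \<in> sets N"
    using sets.sets_Collect_finite_All[where S="{..<n}" and P="\<lambda>i \<omega>. Y i \<omega> \<le> t", OF each]
    by simp
  moreover have "{\<omega> \<in> space N. \<forall>i\<in>{..<n}. Y i \<omega> \<le> t} = {\<omega> \<in> space N. \<forall>i<n. Y i \<omega> \<le> t}"
    by (rule Collect_cong) auto
  ultimately show ?thesis by argo
qed

theorem mainTheorem13:
  fixes n :: nat and G :: "real \<Rightarrow> real" and lam :: real
    and \<alpha> \<alpha>s :: "nat \<Rightarrow> real" and \<phi>1 \<phi>2 :: "real \<Rightarrow> real"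
    and M :: "'a measure" and Ms :: "'b measure"
    and X :: "nat \<Rightarrow> 'a \<Rightarrow> real" and Xs :: "nat \<Rightarrow> 'b \<Rightarrow> real"
  assumes n2: "n \<ge> 2"
    and G: "abs_cont_cdf_nonneg G"
    and lam: "lam > 0"
    and apos: "\<forall>i<n. \<alpha> i > 0" and aspos: "\<forall>i<n. \<alpha>s i > 0"
    and gen1: "archimedean_generator n \<phi>1" and gen2: "archimedean_generator n \<phi>2"
    and M: "prob_space M" and Ms: "prob_space Ms"
    and Xmeas: "\<forall>i<n. X i \<in> borel_measurable M"
    and Xsmeas: "\<forall>i<n. Xs i \<in> borel_measurable Ms"
    and Xcdf: "\<forall>x. measure M {\<omega> \<in> space M. \<forall>i<n. X i \<omega> \<le> x i}
                   = arch_joint_cdf n \<phi>1 G lam \<alpha> x"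
    and Xscdf: "\<forall>x. measure Ms {\<omega> \<in> space Ms. \<forall>i<n. Xs i \<omega> \<le> x i}
                   = arch_joint_cdf n \<phi>2 G lam \<alpha>s x"
    and logc: "log_convex \<phi>1 \<or> log_convex \<phi>2"
    and sup: "superadditive_ext (\<lambda>x. pseudo_inv \<phi>2 (\<phi>1 x))"
    and maj: "\<forall>j\<in>{1..n}. prod_list (take j (decr_sorted n \<alpha>s)) \<le> prod_list (take j (decr_sorted n \<alpha>))"
  shows "\<forall>t. measure Ms {\<omega> \<in> space Ms. Max ((\<lambda>i. Xs i \<omega>) ` {..<n}) > t}
            \<le> measure M {\<omega> \<in> space M. Max ((\<lambda>i. X i \<omega>) ` {..<n}) > t}"
proof
  fix t :: real
  obtain MM where MM: "real_distribution MM" "\<forall>x. G x = measure MM {..x}"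
    using G unfolding abs_cont_cdf_nonneg_def by blast
  define u where "u = G (lam * t)"
  have pMM: "prob_space MM" using MM(1) by (simp add: real_distribution_def)
  have u: "0 \<le> u" "u \<le> 1" unfolding u_def MM(2)[rule_format]
    using prob_space.prob_le_1[OF pMM] by simp_all
  have v1: "\<forall>i<n. 0 \<le> u powr \<alpha> i \<and> u powr \<alpha> i \<le> 1"
  proof (intro allI impI)
    fix i assume "i < n"
    then have "0 < \<alpha> i" using apos by blast
    then show "0 \<le> u powr \<alpha> i \<and> u powr \<alpha> i \<le> 1" using powr_01[OF u, of "\<alpha> i"] by simp
  qed
  have v2: "\<forall>i<n. 0 \<le> u powr \<alpha>s i \<and> u powr \<alpha>s i \<le> 1"
  proof (intro allI impI)
    fix i assume "i < n"
    then have "0 < \<alpha>s i" using aspos by blast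
    then show "0 \<le> u powr \<alpha>s i \<and> u powr \<alpha>s i \<le> 1" using powr_01[OF u, of "\<alpha>s i"] by simp
  qed
  have pt: "gen_ext \<phi>1 (\<Sum>i<n. pseudo_inv \<phi>1 (u powr \<alpha> i))
      \<le> gen_ext \<phi>2 (\<Sum>i<n. pseudo_inv \<phi>2 (u powr \<alpha>s i))"
    using logc
  proof
    assume lc: "log_convex \<phi>1"
    have "gen_ext \<phi>1 (\<Sum>i<n. pseudo_inv \<phi>1 (u powr \<alpha> i))
        \<le> gen_ext \<phi>1 (\<Sum>i<n. pseudo_inv \<phi>1 (u powr \<alpha>s i))"
      by (rule stepB[OF gen1 n2 lc apos aspos maj u])
    also have "\<dots> \<le> gen_ext \<phi>2 (\<Sum>i<n. pseudo_inv \<phi>2 (u powr \<alpha>s i))"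
      by (rule stepA[OF gen1 gen2 n2 sup v2])
    finally show ?thesis .
  next
    assume lc: "log_convex \<phi>2"
    have "gen_ext \<phi>1 (\<Sum>i<n. pseudo_inv \<phi>1 (u powr \<alpha> i))
        \<le> gen_ext \<phi>2 (\<Sum>i<n. pseudo_inv \<phi>2 (u powr \<alpha> i))"
      by (rule stepA[OF gen1 gen2 n2 sup v1])
    also have "\<dots> \<le> gen_ext \<phi>2 (\<Sum>i<n. pseudo_inv \<phi>2 (u powr \<alpha>s i))"
      by (rule stepB[OF gen2 n2 lc apos aspos maj u])
    finally show ?thesis .
  qed
  interpret PM: prob_space M by (rule M)
  interpret PMs: prob_space Ms by (rule Ms)
  have A1: "measure M {\<omega> \<in> space M. \<forall>i<n. X i \<omega> \<le> t} = gen_ext \<phi>1 (\<Sum>i<n. pseudo_inv \<phi>1 (u powr \<alpha> i))"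
  proof -
    have "measure M {\<omega> \<in> space M. \<forall>i<n. X i \<omega> \<le> t} = arch_joint_cdf n \<phi>1 G lam \<alpha> (\<lambda>_. t)"
      by (rule Xcdf[rule_format, of "\<lambda>_. t"])
    also have "\<dots> = gen_ext \<phi>1 (\<Sum>i<n. pseudo_inv \<phi>1 (u powr \<alpha> i))"
      unfolding arch_joint_cdf_def u_def by (rule refl)
    finally show ?thesis .
  qed
  have A2: "measure Ms {\<omega> \<in> space Ms. \<forall>i<n. Xs i \<omega> \<le> t} = gen_ext \<phi>2 (\<Sum>i<n. pseudo_inv \<phi>2 (u powr \<alpha>s i))"
  proof -
    have "measure Ms {\<omega> \<in> space Ms. \<forall>i<n. Xs i \<omega> \<le> t} = arch_joint_cdf n \<phi>2 G lam \<alpha>s (\<lambda>_. t)"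
      by (rule Xscdf[rule_format, of "\<lambda>_. t"])
    also have "\<dots> = gen_ext \<phi>2 (\<Sum>i<n. pseudo_inv \<phi>2 (u powr \<alpha>s i))"
      unfolding arch_joint_cdf_def u_def by (rule refl)
    finally show ?thesis .
  qed
  have "measure M {\<omega> \<in> space M. Max ((\<lambda>i. X i \<omega>) ` {..<n}) > t}
      = 1 - measure M {\<omega> \<in> space M. \<forall>i<n. X i \<omega> \<le> t}"
    unfolding max_set_eq[OF n2] by (rule PM.prob_compl[OF all_le_meas[OF Xmeas]])
  moreover have "measure Ms {\<omega> \<in> space Ms. Max ((\<lambda>i. Xs i \<omega>) ` {..<n}) > t}
      = 1 - measure Ms {\<omega> \<in> space Ms. \<forall>i<n. Xs i \<omega> \<le> t}"
    unfolding max_set_eq[OF n2] by (rule PMs.prob_compl[OF all_le_meas[OF Xsmeas]])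
  ultimately show "measure Ms {\<omega> \<in> space Ms. Max ((\<lambda>i. Xs i \<omega>) ` {..<n}) > t}
            \<le> measure M {\<omega> \<in> space M. Max ((\<lambda>i. X i \<omega>) ` {..<n}) > t}"
    using A1 A2 pt by linarith
qed

end
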